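(* Let $1\le s<n$ and $0<m<\binom{n}{s}$, and let $m=\sum_{k=0}^{\ell-1}\binom{n_{s-k}}{s-k}$ be the $s$-cascade representation of $m$. Then the $(n-s)$-cascade representation of $m'=\binom{n}{s}-m$ is $m'=\sum_{j=0}^{k-1}\binom{n'_{n-s-j}}{n-s-j}$ where $n_{s-\ell+1}=n'_{n-s-k+1}$ and, writing $b$ for this common value, \[\{b,n_{s-\ell+2},\dots,n_s\}\cup\{b,n'_{n-s-k+2},\dots,n'_{n-s}\}=\{b,b+1,\dots,n-1\},\] \[\{b,n_{s-\ell+2},\dots,n_s\}\cap\{b,n'_{n-s-k+2},\dots,n'_{n-s}\}=\{b\}.\] In particular $k+\ell-1=n-b$, i.e. $k=n-\ell-b+1$.
   Context: A strict $q$-cascade is an integer sequence $n_q>n_{q-1}>\dots>n_{q-\ell+1}$ with $0\le\ell\le q$ and $n_{q-j}\ge q-j$ for all $j$. Every integer $m\ge 0$ can be written uniquely as $m=\sum_{j=0}^{\ell-1}\binom{n_{q-j}}{q-j}$ with a strict $q$-cascade; this is the $q$-cascade representation of $m$, of length $\ell$. *)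

theory Defs
  imports Main
begin

text \<open>A strict q-cascade n_q > n_{q-1} > ... > n_{q-l+1} is represented by the list
  [n_q, n_{q-1}, ..., n_{q-l+1}] (so the entry at position j is n_{q-j}).\<close>

definition strict_cascade :: "nat \<Rightarrow> nat list \<Rightarrow> bool" where
  "strict_cascade q ns \<longleftrightarrow>
     length ns \<le> q \<and> sorted_wrt (>) ns \<and> (\<forall>j<length ns. q - j \<le> ns ! j)"

definition cascade_val :: "nat \<Rightarrow> nat list \<Rightarrow> nat" where
  "cascade_val q ns = (\<Sum>j<length ns. (ns ! j) choose (q - j))"

end

theory Submission
  imports Defs
begin

lemma choose_le_Suc: "(a::nat) choose k \<le> Suc a choose k"
  by (cases k) auto

lemma choose_mono_n: "(a::nat) \<le> b \<Longrightarrow> a choose k \<le> b choose k"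
proof (induction b)
  case 0 then show ?case by simp
next
  case (Suc b)
  show ?case
  proof (cases "a = Suc b")
    case False
    then have "a \<le> b" using Suc.prems by simp
    then show ?thesis using Suc.IH choose_le_Suc[of b k] by linarith
  qed simp
qed

lemma sc_Nil[simp]: "strict_cascade q []"
  by (simp add: strict_cascade_def)

lemma cv_Nil[simp]: "cascade_val q [] = 0"
  by (simp add: cascade_val_def)

lemma sc_Cons: "strict_cascade q (a#rest) \<longleftrightarrow>
   1 \<le> q \<and> q \<le> a \<and> strict_cascade (q-1) rest \<and> (\<forall>x\<in>set rest. x < a)"
proof
  assume h: "strict_cascade q (a#rest)"
  then have l: "Suc (length rest) \<le> q" and s: "sorted_wrt (>) (a#rest)"
    and c: "\<forall>j<Suc (length rest). q - j \<le> (a#rest) ! j"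
    by (auto simp: strict_cascade_def)
  have "q \<le> a" using c[rule_format, of 0] by simp
  moreover have "\<forall>j<length rest. q - 1 - j \<le> rest ! j"
  proof (intro allI impI)
    fix j assume "j < length rest"
    then have "q - Suc j \<le> (a#rest) ! Suc j" using c by blast
    then show "q - 1 - j \<le> rest ! j" by simp
  qed
  ultimately show "1 \<le> q \<and> q \<le> a \<and> strict_cascade (q-1) rest \<and> (\<forall>x\<in>set rest. x < a)"
    using l s by (auto simp: strict_cascade_def)
next
  assume h: "1 \<le> q \<and> q \<le> a \<and> strict_cascade (q-1) rest \<and> (\<forall>x\<in>set rest. x < a)"
  have "\<forall>j<Suc (length rest). q - j \<le> (a#rest) ! j"
  proof (intro allI impI)
    fix j assume j: "j < Suc (length rest)"
    show "q - j \<le> (a#rest) ! j"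
    proof (cases j)
      case 0 then show ?thesis using h by simp
    next
      case (Suc i)
      then have "q - 1 - i \<le> rest ! i" using h j by (auto simp: strict_cascade_def)
      then show ?thesis using Suc by simp
    qed
  qed
  then show "strict_cascade q (a#rest)" using h by (auto simp: strict_cascade_def)
qed

lemma cv_Cons: "cascade_val q (a#rest) = (a choose q) + cascade_val (q-1) rest"
proof -
  have "cascade_val q (a#rest) = (a choose q) + (\<Sum>j<length rest. (a#rest) ! Suc j choose (q - Suc j))"
    unfolding cascade_val_def by (simp only: length_Cons sum.lessThan_Suc_shift) simp
  also have "(\<Sum>j<length rest. (a#rest) ! Suc j choose (q - Suc j)) = cascade_val (q-1) rest"
    unfolding cascade_val_def
  proof (rule sum.cong)
    fix j show "(a#rest) ! Suc j choose (q - Suc j) = rest ! j choose (q - 1 - j)"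
      by (simp only: nth_Cons_Suc) (metis diff_Suc_eq_diff_pred)
  qed simp
  finally show ?thesis .
qed

lemma cv_upper: "strict_cascade q xs \<Longrightarrow> (\<forall>x\<in>set xs. x < a) \<Longrightarrow> q \<le> a
  \<Longrightarrow> cascade_val q xs < a choose q"
proof (induction xs arbitrary: q a)
  case Nil then show ?case by simp
next
  case (Cons b ys)
  from Cons.prems have q1: "1 \<le> q" and qb: "q \<le> b" and sc: "strict_cascade (q-1) ys"
    and ys: "\<forall>x\<in>set ys. x < b" and ba: "b < a" by (auto simp: sc_Cons)
  have "cascade_val (q-1) ys < b choose (q-1)" using Cons.IH[OF sc ys] qb by simp
  then have "cascade_val q (b#ys) < (b choose q) + (b choose (q-1))" by (simp add: cv_Cons)
  also have "\<dots> = Suc b choose q" using q1 by (cases q) auto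
  also have "\<dots> \<le> a choose q" using ba by (intro choose_mono_n) simp
  finally show ?case .
qed

lemma cv_bounds: assumes "strict_cascade q (a#rest)"
  shows "a choose q \<le> cascade_val q (a#rest)" "cascade_val q (a#rest) < Suc a choose q"
proof -
  from assms have q1: "1 \<le> q" and qa: "q \<le> a" and sc: "strict_cascade (q-1) rest"
    and r: "\<forall>x\<in>set rest. x < a" by (auto simp: sc_Cons)
  show "a choose q \<le> cascade_val q (a#rest)" by (simp add: cv_Cons)
  have "cascade_val (q-1) rest < a choose (q-1)" using cv_upper[OF sc r] qa by simp
  then have "cascade_val q (a#rest) < (a choose q) + (a choose (q-1))" by (simp add: cv_Cons)
  also have "\<dots> = Suc a choose q" using q1 by (cases q) auto
  finally show "cascade_val q (a#rest) < Suc a choose q" .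
qed

lemma cv_pos: "strict_cascade q xs \<Longrightarrow> xs \<noteq> [] \<Longrightarrow> 0 < cascade_val q xs"
proof (cases xs)
  case (Cons a rest)
  assume "strict_cascade q xs"
  then have "a choose q \<le> cascade_val q xs" "q \<le> a" using cv_bounds(1) Cons by (auto simp: sc_Cons)
  then show ?thesis by (metis le_trans zero_less_binomial_iff not_le le0 less_le_trans)
qed simp

lemma cv_zero: "strict_cascade q xs \<Longrightarrow> cascade_val q xs = 0 \<Longrightarrow> xs = []"
  using cv_pos by fastforce

definition concl :: "nat \<Rightarrow> nat list \<Rightarrow> nat list \<Rightarrow> bool" where
  "concl n ns ns' \<longleftrightarrow> ns \<noteq> [] \<and> ns' \<noteq> [] \<and> last ns = last ns'
    \<and> set ns \<union> set ns' = {last ns..<n}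
    \<and> set ns \<inter> set ns' = {last ns}
    \<and> length ns' + length ns - 1 = n - last ns"

lemma concl_sym: "concl n ns ns' \<Longrightarrow> concl n ns' ns"
  unfolding concl_def by (metis inf_commute sup_commute add.commute)


lemma step:
  assumes IH: "\<And>p q ns ns'. 1\<le>p \<Longrightarrow> 1\<le>q \<Longrightarrow> p+q = n \<Longrightarrow> strict_cascade p ns
     \<Longrightarrow> strict_cascade q ns' \<Longrightarrow> cascade_val p ns + cascade_val q ns' = n choose p
     \<Longrightarrow> 0 < cascade_val p ns \<Longrightarrow> 0 < cascade_val q ns' \<Longrightarrow> concl n ns ns'"
    and p1: "1\<le>p" and q1: "1\<le>q" and pq: "p+q = Suc n"
    and sc: "strict_cascade p (n#rest)" and sc': "strict_cascade q ns'"
    and sum: "cascade_val p (n#rest) + cascade_val q ns' = Suc n choose p"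
    and pos': "0 < cascade_val q ns'"
  shows "concl (Suc n) (n#rest) ns'"
proof -
  from sc have pn: "p \<le> n" and scr: "strict_cascade (p-1) rest"
    and rn: "\<forall>x\<in>set rest. x < n" by (auto simp: sc_Cons)
  define m1 where "m1 = cascade_val (p-1) rest"
  have pasc: "Suc n choose p = (n choose p) + (n choose (p-1))"
    using p1 by (cases p) auto
  have qq: "n - (p-1) = q" using pq p1 by simp
  have sym: "n choose (p-1) = n choose q"
    using binomial_symmetric[of "p-1" n] pn unfolding qq by simp
  have eq: "m1 + cascade_val q ns' = n choose q"
    using sum pasc sym by (simp add: cv_Cons m1_def)
  from pos' have "ns' \<noteq> []" by auto
  then obtain b rest' where ns': "ns' = b#rest'" by (cases ns') auto
  from sc' ns' have qb: "q \<le> b" and scr': "strict_cascade (q-1) rest'"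
    and rb: "\<forall>x\<in>set rest'. x < b" by (auto simp: sc_Cons)
  show ?thesis
  proof (cases "m1 = 0")
    case True
    then have rest: "rest = []" using cv_zero[OF scr] by (simp add: m1_def)
    have v: "cascade_val q ns' = n choose q" using eq True by simp
    have b1: "n choose q \<le> cascade_val q ns'" "cascade_val q ns' < Suc b choose q"
      using cv_bounds[OF sc'[unfolded ns']] ns' v by auto
    have b2: "b choose q \<le> cascade_val q ns'" using cv_bounds(1)[OF sc'[unfolded ns']] ns' by simp
    have "b = n"
    proof (rule ccontr)
      assume "b \<noteq> n"
      then consider "Suc b \<le> n" | "Suc n \<le> b" by linarith
      then show False
      proof cases
        case 1 then have "Suc b choose q \<le> n choose q" by (rule choose_mono_n)
        then show False using b1 by linarith
      next
        case 2 then have "Suc n choose q \<le> b choose q" by (rule choose_mono_n)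
        moreover have "Suc n choose q = (n choose q) + (n choose (q-1))"
          using q1 by (cases q) auto
        moreover have "0 < n choose (q-1)" using pq p1 by simp
        ultimately show False using b2 v by linarith
      qed
    qed
    then have "cascade_val (q-1) rest' = 0" using v ns' by (simp add: cv_Cons)
    then have "rest' = []" using cv_zero[OF scr'] by simp
    then show ?thesis using rest ns' \<open>b = n\<close> by (auto simp: concl_def)
  next
    case False
    then have "rest \<noteq> []" by (auto simp: m1_def)
    then have "1 \<le> p - 1" using scr by (cases rest) (auto simp: sc_Cons)
    have "m1 < n choose (p-1)" unfolding m1_def using cv_upper[OF scr rn] pn by simp
    then have pos2: "0 < cascade_val q ns'" using eq sym by linarith
    have c: "concl n rest ns'"
      using IH[OF \<open>1 \<le> p - 1\<close> q1 _ scr sc' _ _ pos2] pq p1 eq sym False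
      by (simp add: m1_def)
    then have ne: "rest \<noteq> []" "ns' \<noteq> []" and la: "last rest = last ns'"
      and un: "set rest \<union> set ns' = {last rest..<n}"
      and it: "set rest \<inter> set ns' = {last rest}"
      and ln: "length ns' + length rest - 1 = n - last rest"
      by (auto simp: concl_def)
    have lt: "last rest < n" using rn ne(1) by simp
    have nn: "n \<notin> set ns'" using un by auto
    have last: "last (n#rest) = last rest" using ne by simp
    have "set (n#rest) \<union> set ns' = {last rest..<Suc n}" using un lt by auto
    moreover have "set (n#rest) \<inter> set ns' = {last rest}" using it nn by auto
    moreover have "length ns' + length (n#rest) - 1 = Suc n - last rest"
      using ln lt ne by (cases ns'; cases rest) auto
    ultimately show ?thesis using ne la last by (simp add: concl_def)
  qed
qed

lemma main:
  "1\<le>p \<Longrightarrow> 1\<le>q \<Longrightarrow> p+q = n \<Longrightarrow> strict_cascade p ns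
     \<Longrightarrow> strict_cascade q ns' \<Longrightarrow> cascade_val p ns + cascade_val q ns' = n choose p
     \<Longrightarrow> 0 < cascade_val p ns \<Longrightarrow> 0 < cascade_val q ns' \<Longrightarrow> concl n ns ns'"
proof (induction n arbitrary: p q ns ns')
  case 0 then show ?case by simp
next
  case (Suc n)
  from Suc.prems(7) have "ns \<noteq> []" by auto
  then obtain a rest where ns: "ns = a#rest" by (cases ns) auto
  from Suc.prems(8) have "ns' \<noteq> []" by auto
  then obtain b rest' where ns': "ns' = b#rest'" by (cases ns') auto
  have qq: "Suc n - p = q" using Suc.prems(3) by simp
  have sym: "Suc n choose p = Suc n choose q"
    using binomial_symmetric[of p "Suc n"] Suc.prems(3) unfolding qq by simp
  have av: "a choose p \<le> cascade_val p ns" "cascade_val p ns < Suc a choose p"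
    using cv_bounds[OF Suc.prems(4)[unfolded ns]] ns by auto
  have bv: "b choose q \<le> cascade_val q ns'" "cascade_val q ns' < Suc b choose q"
    using cv_bounds[OF Suc.prems(5)[unfolded ns']] ns' by auto
  have lt: "cascade_val p ns < Suc n choose p" using Suc.prems(6,8) by linarith
  have lt': "cascade_val q ns' < Suc n choose q" using Suc.prems(6,7) sym by linarith
  have an: "a < Suc n"
  proof (rule ccontr)
    assume "\<not> a < Suc n"
    then have "Suc n choose p \<le> a choose p" by (intro choose_mono_n) simp
    then show False using av lt by linarith
  qed
  have bn: "b < Suc n"
  proof (rule ccontr)
    assume "\<not> b < Suc n"
    then have "Suc n choose q \<le> b choose q" by (intro choose_mono_n) simp
    then show False using bv lt' by linarith
  qed
  show ?case
  proof (cases "a = n")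
    case True
    show ?thesis unfolding ns True
      by (rule step) (use Suc.IH Suc.prems ns True in auto)
  next
    case False
    then have "Suc a \<le> n" using an by simp
    then have "Suc a choose p \<le> n choose p" by (rule choose_mono_n)
    then have v1: "cascade_val p ns < n choose p" using av by linarith
    have pasc: "Suc n choose p = (n choose p) + (n choose (p-1))"
      using Suc.prems(1) by (cases p) auto
    have qq2: "n - (p-1) = q" using Suc.prems(1,3) by simp
    have s2: "n choose (p-1) = n choose q"
      using binomial_symmetric[of "p-1" n] Suc.prems(1,3) unfolding qq2 by simp
    have v2: "n choose q < cascade_val q ns'" using v1 pasc s2 Suc.prems(6) by linarith
    have "b = n"
    proof (rule ccontr)
      assume "b \<noteq> n"
      then have "Suc b \<le> n" using bn by simp
      then have "Suc b choose q \<le> n choose q" by (rule choose_mono_n)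
      then show False using bv v2 by linarith
    qed
    have "concl (Suc n) ns' ns" unfolding ns' \<open>b = n\<close>
      by (rule step) (use Suc.IH Suc.prems ns' \<open>b = n\<close> sym in auto)
    then show ?thesis by (rule concl_sym)
  qed
qed

theorem mainTheorem9:
  fixes n s m :: nat and ns ns' :: "nat list"
  assumes "1 \<le> s" and "s < n"
    and "0 < m" and "m < n choose s"
    and "strict_cascade s ns" and "cascade_val s ns = m"
    and "strict_cascade (n - s) ns'" and "cascade_val (n - s) ns' = (n choose s) - m"
  shows "ns \<noteq> [] \<and> ns' \<noteq> [] \<and> last ns = last ns'
    \<and> set ns \<union> set ns' = {last ns..<n}
    \<and> set ns \<inter> set ns' = {last ns}
    \<and> length ns' + length ns - 1 = n - last ns"
proof -
  have "concl n ns ns'"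
    by (rule main[of s "n - s"]) (use assms in auto)
  then show ?thesis by (simp add: concl_def)
qed

end
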